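(* Let $\mathcal{B}$ be a unital Banach algebra, $q\in\mathbb{C}$ with $0<|q|<1$, and $x,y\in\mathcal{B}$ with $xy=q^{-1}yx$, such that the spectrum $\sigma(x)$ of $x$ in $\mathcal{B}$ satisfies $\sigma(x)_q=\sigma(x)$. Then every finite sum $f=\sum_{k\ge1}r_k(x)y^k$, where each $r_k$ is a rational function with no poles on $\sigma(x)$ and $r_k(0)=0$, is quasinilpotent in $\mathcal{B}$ (equivalently, in the closed subalgebra $\mathcal{A}_{q,x}$).
   Context: For $S\subseteq\mathbb{C}$, $S_q=\{0\}\cup\bigcup_{n\ge0}q^nS$ is its $q$-hull. For a rational function $r$ without poles on $\sigma(x)$, $r(x)\in\mathcal{B}$ is defined by the holomorphic (rational) functional calculus. $\mathcal{A}_{q,x}$ is the norm closure in $\mathcal{B}$ of the subalgebra generated by $y$ and all such $r(x)$. Quasinilpotent means spectrum $\{0\}$ (spectral radius zero). *)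

theory Defs
  imports "HOL-Analysis.Analysis" "HOL-Computational_Algebra.Polynomial"
begin

class complex_banach_algebra_1 = real_normed_algebra_1 + banach +
  fixes scaleC :: "complex \<Rightarrow> 'a \<Rightarrow> 'a" (infixr \<open>*\<^sub>C\<close> 75)
  assumes scaleC_add_right: "a *\<^sub>C (x + y) = a *\<^sub>C x + a *\<^sub>C y"
    and scaleC_add_left: "(a + b) *\<^sub>C x = a *\<^sub>C x + b *\<^sub>C x"
    and scaleC_scaleC: "a *\<^sub>C (b *\<^sub>C x) = (a * b) *\<^sub>C x"
    and scaleC_one: "1 *\<^sub>C x = x"
    and scaleR_scaleC: "scaleR r x = complex_of_real r *\<^sub>C x"
    and norm_scaleC: "norm (a *\<^sub>C x) = cmod a * norm x"
    and mult_scaleC_left: "(a *\<^sub>C x) * y = a *\<^sub>C (x * y)"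
    and mult_scaleC_right: "x * (a *\<^sub>C y) = a *\<^sub>C (x * y)"

definition invertible_el :: "'a::complex_banach_algebra_1 \<Rightarrow> bool" where
  "invertible_el u \<longleftrightarrow> (\<exists>v. v * u = 1 \<and> u * v = 1)"

definition inv_el :: "'a::complex_banach_algebra_1 \<Rightarrow> 'a" where
  "inv_el u = (THE v. v * u = 1 \<and> u * v = 1)"

definition spectrum :: "'a::complex_banach_algebra_1 \<Rightarrow> complex set" where
  "spectrum x = {c. \<not> invertible_el (x - c *\<^sub>C 1)}"

definition q_hull :: "complex \<Rightarrow> complex set \<Rightarrow> complex set" where
  "q_hull q S = {0} \<union> (\<Union>n::nat. (\<lambda>s. q ^ n * s) ` S)"

definition poly_el :: "complex poly \<Rightarrow> 'a::complex_banach_algebra_1 \<Rightarrow> 'a" where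
  "poly_el p x = (\<Sum>i\<le>degree p. coeff p i *\<^sub>C x ^ i)"

definition rat_el :: "complex poly \<Rightarrow> complex poly \<Rightarrow> 'a::complex_banach_algebra_1 \<Rightarrow> 'a" where
  "rat_el p d x = poly_el p x * inv_el (poly_el d x)"

end

theory Submission
  imports Defs "HOL-Computational_Algebra.Fundamental_Theorem_Algebra"
begin

context complex_banach_algebra_1 begin

lemma scaleC_zero_left[simp]: "0 *\<^sub>C x = 0"
proof -
  have "0 *\<^sub>C x = 0 *\<^sub>C x + 0 *\<^sub>C x" using scaleC_add_left[of 0 0 x] by simp
  thus ?thesis by simp
qed

lemma scaleC_zero_right[simp]: "a *\<^sub>C 0 = 0"
proof -
  have "a *\<^sub>C 0 = a *\<^sub>C 0 + a *\<^sub>C 0" using scaleC_add_right[of a 0 0] by simp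
  thus ?thesis by simp
qed

lemma scaleC_minus_left: "(- a) *\<^sub>C x = - (a *\<^sub>C x)"
proof -
  have "(- a) *\<^sub>C x + a *\<^sub>C x = 0" using scaleC_add_left[of "-a" a x] by simp
  thus ?thesis by (simp add: eq_neg_iff_add_eq_0)
qed

lemma scaleC_minus_right: "a *\<^sub>C (- x) = - (a *\<^sub>C x)"
proof -
  have "a *\<^sub>C (- x) + a *\<^sub>C x = 0" using scaleC_add_right[of a "-x" x] by simp
  thus ?thesis by (simp add: eq_neg_iff_add_eq_0)
qed

lemma scaleC_diff_right: "a *\<^sub>C (x - y) = a *\<^sub>C x - a *\<^sub>C y"
  using scaleC_add_right[of a x "-y"] by (simp add: scaleC_minus_right)

lemma scaleC_diff_left: "(a - b) *\<^sub>C x = a *\<^sub>C x - b *\<^sub>C x"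
  using scaleC_add_left[of a "-b" x] by (simp add: scaleC_minus_left)

lemma scaleC_sum_right: "a *\<^sub>C (\<Sum>i\<in>S. f i) = (\<Sum>i\<in>S. a *\<^sub>C f i)"
  by (induction S rule: infinite_finite_induct) (auto simp: scaleC_add_right)

lemma scaleC_sum_left: "(\<Sum>i\<in>S. f i) *\<^sub>C x = (\<Sum>i\<in>S. f i *\<^sub>C x)"
  by (induction S rule: infinite_finite_induct) (auto simp: scaleC_add_left)

lemma scaleC_power: "(c *\<^sub>C x) ^ n = (c ^ n) *\<^sub>C (x ^ n)"
  by (induction n) (auto simp: scaleC_one mult_scaleC_left mult_scaleC_right scaleC_scaleC mult.commute)

lemma scaleC_commute: "(c *\<^sub>C 1) * x = x * (c *\<^sub>C 1)"
  by (simp add: mult_scaleC_left mult_scaleC_right)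

end

lemma invertible_elI: "v * u = 1 \<Longrightarrow> u * v = 1 \<Longrightarrow> invertible_el u"
  unfolding invertible_el_def by blast

lemma inv_el: assumes "invertible_el u"
  shows "inv_el u * u = 1" "u * inv_el u = 1"
proof -
  obtain v where v: "v * u = 1" "u * v = 1" using assms unfolding invertible_el_def by blast
  have uniq: "w = v" if "w * u = 1" "u * w = 1" for w
  proof -
    have "w = w * (u * v)" using v by simp
    also have "\<dots> = (w * u) * v" by (simp add: mult.assoc)
    finally show ?thesis using that by simp
  qed
  have "inv_el u = v" unfolding inv_el_def
  proof (rule the_equality)
    show "v * u = 1 \<and> u * v = 1" using v by blast
    show "\<And>w. w * u = 1 \<and> u * w = 1 \<Longrightarrow> w = v" using uniq by blast
  qed
  thus "inv_el u * u = 1" "u * inv_el u = 1" using v by auto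
qed

lemma invertible_mult: assumes "invertible_el u" "invertible_el w"
  shows "invertible_el (u * w)"
proof (rule invertible_elI[of "inv_el w * inv_el u"])
  have "inv_el w * inv_el u * (u * w) = inv_el w * (inv_el u * u) * w" by (simp add: mult.assoc)
  thus "inv_el w * inv_el u * (u * w) = 1" using inv_el[OF assms(1)] inv_el[OF assms(2)] by simp
  have "u * w * (inv_el w * inv_el u) = u * (w * inv_el w) * inv_el u" by (simp add: mult.assoc)
  thus "u * w * (inv_el w * inv_el u) = 1" using inv_el[OF assms(1)] inv_el[OF assms(2)] by simp
qed

lemma invertible_scale: assumes "invertible_el u" "c \<noteq> 0"
  shows "invertible_el (c *\<^sub>C u)"
proof (rule invertible_elI[of "inverse c *\<^sub>C inv_el u"])
  have "inverse c *\<^sub>C inv_el u * c *\<^sub>C u = (c * inverse c) *\<^sub>C (inv_el u * u)"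
    by (simp add: mult_scaleC_left mult_scaleC_right scaleC_scaleC)
  thus "inverse c *\<^sub>C inv_el u * c *\<^sub>C u = 1"
    using assms inv_el(1)[OF assms(1)] by (simp add: scaleC_one)
  have "c *\<^sub>C u * (inverse c *\<^sub>C inv_el u) = (inverse c * c) *\<^sub>C (u * inv_el u)"
    by (simp add: mult_scaleC_left mult_scaleC_right scaleC_scaleC)
  thus "c *\<^sub>C u * (inverse c *\<^sub>C inv_el u) = 1"
    using assms inv_el(2)[OF assms(1)] by (simp add: scaleC_one)
qed

lemma invertible_one: "invertible_el (1::'a::complex_banach_algebra_1)"
  by (rule invertible_elI[of 1]) simp_all

lemma invertible_const: "c \<noteq> 0 \<Longrightarrow> invertible_el (c *\<^sub>C (1::'a::complex_banach_algebra_1))"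
  using invertible_scale[OF invertible_one] by blast



lemma poly_el_bound:
  assumes "degree p < n"
  shows "poly_el p z = (\<Sum>i<n. coeff p i *\<^sub>C z ^ i)"
  unfolding poly_el_def
proof (rule sum.mono_neutral_left)
  show "\<forall>i\<in>{..<n} - {..degree p}. coeff p i *\<^sub>C z ^ i = 0"
    by (auto simp: coeff_eq_0)
qed (use assms in auto)

lemma poly_el_0[simp]: "poly_el 0 z = 0"
  unfolding poly_el_def by simp

lemma poly_el_add: "poly_el (p + q) z = poly_el p z + poly_el q z"
proof -
  define n where "n = Suc (max (degree p) (degree q))"
  have "degree (p + q) < n" using degree_add_le[of p "max (degree p) (degree q)" q]
    unfolding n_def by auto
  moreover have "degree p < n" "degree q < n" unfolding n_def by auto
  ultimately show ?thesis
    by (simp add: poly_el_bound[of _ n] scaleC_add_left sum.distrib)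
qed

lemma poly_el_smult: "poly_el (smult a p) z = a *\<^sub>C poly_el p z"
proof -
  have "degree (smult a p) < Suc (degree p)" using degree_smult_le[of a p] by simp
  hence "poly_el (smult a p) z = (\<Sum>i<Suc (degree p). coeff (smult a p) i *\<^sub>C z ^ i)"
    by (rule poly_el_bound)
  also have "\<dots> = a *\<^sub>C (\<Sum>i<Suc (degree p). coeff p i *\<^sub>C z ^ i)"
    by (simp only: scaleC_sum_right coeff_smult scaleC_scaleC)
  also have "(\<Sum>i<Suc (degree p). coeff p i *\<^sub>C z ^ i) = poly_el p z"
    by (rule poly_el_bound[symmetric]) simp
  finally show ?thesis .
qed

lemma poly_el_pCons: "poly_el (pCons a p) z = a *\<^sub>C 1 + z * poly_el p z"
proof -
  define d where "d = degree p"
  have "degree (pCons a p) < Suc (Suc d)" unfolding d_def by simp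
  hence "poly_el (pCons a p) z = (\<Sum>i<Suc (Suc d). coeff (pCons a p) i *\<^sub>C z ^ i)"
    by (rule poly_el_bound)
  also have "\<dots> = a *\<^sub>C 1 + (\<Sum>i<Suc d. coeff p i *\<^sub>C z ^ Suc i)"
    by (subst sum.lessThan_Suc_shift) simp
  also have "(\<Sum>i<Suc d. coeff p i *\<^sub>C z ^ Suc i) = z * (\<Sum>i<Suc d. coeff p i *\<^sub>C z ^ i)"
    by (simp add: sum_distrib_left mult_scaleC_right del: sum.lessThan_Suc)
  also have "(\<Sum>i<Suc d. coeff p i *\<^sub>C z ^ i) = poly_el p z"
    by (rule poly_el_bound[symmetric]) (simp add: d_def)
  finally show ?thesis .
qed

lemma poly_el_const: "poly_el [:c:] z = c *\<^sub>C 1"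
  by (simp add: poly_el_pCons)

lemma poly_el_mult: "poly_el (p * q) z = poly_el p z * poly_el q z"
proof (induction p)
  case 0
  then show ?case by simp
next
  case (pCons a p)
  show ?case
    by (simp add: poly_el_add poly_el_smult poly_el_pCons pCons.IH distrib_right
        mult_scaleC_left mult.assoc)
qed

lemma poly_el_at0: "poly_el p (0::'a::complex_banach_algebra_1) = poly p 0 *\<^sub>C 1"
  by (induction p) (simp_all add: poly_el_pCons)

lemma poly_el_comm:
  fixes y u v :: "'a::complex_banach_algebra_1"
  assumes "y * u = v * y"
  shows "y * poly_el p u = poly_el p v * y"
proof (induction p)
  case 0
  then show ?case by simp
next
  case (pCons a p)
  have "y * poly_el (pCons a p) u = a *\<^sub>C y + (y * u) * poly_el p u"
    by (simp add: poly_el_pCons distrib_left mult_scaleC_right mult.assoc)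
  also have "\<dots> = a *\<^sub>C y + v * (y * poly_el p u)" by (simp add: assms mult.assoc)
  also have "\<dots> = poly_el (pCons a p) v * y"
    by (simp add: pCons.IH poly_el_pCons distrib_right mult_scaleC_left mult.assoc)
  finally show ?case .
qed

lemma poly_el_scale:
  "poly_el p (c *\<^sub>C z) = (\<Sum>i\<le>degree p. (coeff p i * c ^ i) *\<^sub>C z ^ i)"
  unfolding poly_el_def by (simp add: scaleC_power scaleC_scaleC)

lemma tendsto_scaleC:
  fixes v :: "'a::complex_banach_algebra_1"
  assumes "(g \<longlongrightarrow> l) F"
  shows "((\<lambda>t. g t *\<^sub>C v) \<longlongrightarrow> l *\<^sub>C v) F"
proof -
  have "((\<lambda>t. g t *\<^sub>C v - l *\<^sub>C v) \<longlongrightarrow> 0) F"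
  proof (rule Lim_null_comparison)
    show "\<forall>\<^sub>F t in F. norm (g t *\<^sub>C v - l *\<^sub>C v) \<le> cmod (g t - l) * norm v"
      by (simp add: scaleC_diff_left[symmetric] norm_scaleC)
    have "((\<lambda>t. cmod (g t - l)) \<longlongrightarrow> 0) F"
      using assms by (simp add: tendsto_norm_zero LIM_zero)
    thus "((\<lambda>t. cmod (g t - l) * norm v) \<longlongrightarrow> 0) F"
      by (rule tendsto_mult_left_zero)
  qed
  thus ?thesis by (rule LIM_zero_cancel)
qed

lemma poly_el_tendsto:
  fixes z :: "'a::complex_banach_algebra_1"
  assumes "(g \<longlongrightarrow> l) F"
  shows "((\<lambda>t. poly_el p (g t *\<^sub>C z)) \<longlongrightarrow> poly_el p (l *\<^sub>C z)) F"
  unfolding poly_el_scale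
  by (intro tendsto_sum tendsto_scaleC tendsto_mult tendsto_const tendsto_power assms)

lemma inv_poly:
  fixes z :: "'a::complex_banach_algebra_1"
  assumes "D \<noteq> 0" "\<And>c. poly D c = 0 \<Longrightarrow> invertible_el (z - c *\<^sub>C 1)"
  shows "invertible_el (poly_el D z)"
  using assms
proof (induction "degree D" arbitrary: D rule: less_induct)
  case less
  show ?case
  proof (cases "degree D = 0")
    case True
    then obtain d where d: "D = [:d:]" using degree_eq_zeroE by blast
    with less.prems have "d \<noteq> 0" by auto
    thus ?thesis using d by (simp add: poly_el_const invertible_const)
  next
    case False
    have "\<not> constant (poly D)" using False constant_degree[of D] by simp
    then obtain a where a: "poly D a = 0"
      using fundamental_theorem_of_algebra by blast
    then obtain Q where Q: "D = [:-a, 1:] * Q" using poly_eq_0_iff_dvd by blast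
    have Q0: "Q \<noteq> 0" using Q less.prems(1) by auto
    have dQ: "degree D = Suc (degree Q)" unfolding Q using Q0 by (subst degree_mult_eq) auto
    have "invertible_el (poly_el Q z)"
    proof (rule less.hyps)
      show "degree Q < degree D" using dQ by simp
      show "Q \<noteq> 0" by (rule Q0)
      fix c assume "poly Q c = 0"
      hence "poly D c = 0" using Q by simp
      thus "invertible_el (z - c *\<^sub>C 1)" by (rule less.prems(2))
    qed
    moreover have "poly_el [:-a, 1:] z = z - a *\<^sub>C 1"
      by (simp add: poly_el_pCons scaleC_minus_left scaleC_one)
    ultimately show ?thesis using less.prems(2)[OF a]
      by (subst Q, subst poly_el_mult) (simp add: invertible_mult)
  qed
qed



lemma norm_sum_list_bound:
  fixes g :: "'b \<Rightarrow> 'a::real_normed_vector"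
  assumes "\<And>p. p \<in> set L \<Longrightarrow> norm (g p) \<le> B"
  shows "norm (sum_list (map g L)) \<le> real (length L) * B"
  using assms
proof (induction L)
  case Nil
  then show ?case by simp
next
  case (Cons p L)
  have "norm (sum_list (map g (p # L))) \<le> norm (g p) + norm (sum_list (map g L))"
    by (simp add: norm_triangle_ineq)
  also have "\<dots> \<le> B + real (length L) * B"
    using Cons by (intro add_mono) auto
  finally show ?case by (simp add: algebra_simps)
qed

lemma expansion_step:
  fixes a :: "nat \<Rightarrow> nat \<Rightarrow> 'a::real_normed_algebra_1" and y :: 'a
  assumes comm: "\<And>k e. k \<in> {1..N} \<Longrightarrow> y ^ e * a k 0 = a k e * y ^ e"
  shows "\<exists>L'. sum_list (map (\<lambda>p. fst p * y ^ snd p) L) * (\<Sum>k=1..N. a k 0 * y ^ k)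
      = sum_list (map (\<lambda>p. fst p * y ^ snd p) L') \<and> length L' = N * length L \<and>
      (\<forall>p'\<in>set L'. \<exists>p\<in>set L. \<exists>k\<in>{1..N}. fst p' = fst p * a k (snd p) \<and> snd p' = snd p + k)"
proof (induction L)
  case Nil
  then show ?case by (intro exI[of _ "[]"]) simp
next
  case (Cons p L)
  obtain c e where p: "p = (c, e)" by fastforce
  from Cons obtain L' where L': "sum_list (map (\<lambda>p. fst p * y ^ snd p) L) * (\<Sum>k=1..N. a k 0 * y ^ k)
      = sum_list (map (\<lambda>p. fst p * y ^ snd p) L')" "length L' = N * length L"
      "\<forall>p'\<in>set L'. \<exists>p\<in>set L. \<exists>k\<in>{1..N}. fst p' = fst p * a k (snd p) \<and> snd p' = snd p + k"
    by blast
  define M where "M = map (\<lambda>k. (c * a k e, e + k)) [1..<Suc N]"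
  have "sum_list (map (\<lambda>p. fst p * y ^ snd p) M) = sum_list (map (\<lambda>k. c * a k e * y ^ (e + k)) [1..<Suc N])"
    unfolding M_def map_map o_def by simp
  also have "\<dots> = (\<Sum>k\<in>set [1..<Suc N]. c * a k e * y ^ (e + k))"
    by (rule interv_sum_list_conv_sum_set_nat)
  also have "\<dots> = (\<Sum>k=1..N. c * a k e * y ^ (e + k))"
    by (simp only: set_upt atLeastLessThanSuc_atLeastAtMost)
  also have "\<dots> = (\<Sum>k=1..N. c * (y ^ e * a k 0) * y ^ k)"
  proof (intro sum.cong refl)
    fix k assume "k \<in> {1..N}"
    hence "y ^ e * a k 0 = a k e * y ^ e" by (rule comm)
    thus "c * a k e * y ^ (e + k) = c * (y ^ e * a k 0) * y ^ k" by (simp add: power_add mult.assoc)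
  qed
  also have "\<dots> = c * y ^ e * (\<Sum>k=1..N. a k 0 * y ^ k)"
    by (simp add: sum_distrib_left mult.assoc)
  finally have hM: "sum_list (map (\<lambda>p. fst p * y ^ snd p) M) = c * y ^ e * (\<Sum>k=1..N. a k 0 * y ^ k)" .
  show ?case
  proof (intro exI[of _ "M @ L'"] conjI)
    show "sum_list (map (\<lambda>p. fst p * y ^ snd p) (p # L)) * (\<Sum>k = 1..N. a k 0 * y ^ k) =
      sum_list (map (\<lambda>p. fst p * y ^ snd p) (M @ L'))"
      using hM L'(1) by (simp add: p distrib_right)
    show "length (M @ L') = N * length (p # L)" using L'(2) by (simp add: M_def)
    show "\<forall>p'\<in>set (M @ L'). \<exists>p\<in>set (p # L). \<exists>k\<in>{1..N}. fst p' = fst p * a k (snd p) \<and> snd p' = snd p + k"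
      using L'(3) by (auto simp: M_def p)
  qed
qed

lemma expansion:
  fixes a :: "nat \<Rightarrow> nat \<Rightarrow> 'a::real_normed_algebra_1" and y :: 'a
  assumes comm: "\<And>k e. k \<in> {1..N} \<Longrightarrow> y ^ e * a k 0 = a k e * y ^ e"
    and E: "\<And>j. 0 \<le> E j"
    and bnd: "\<And>k t j. k \<in> {1..N} \<Longrightarrow> j \<le> t \<Longrightarrow> norm (a k t) \<le> E j"
  shows "\<exists>L. (\<Sum>k=1..N. a k 0 * y ^ k) ^ n = sum_list (map (\<lambda>p. fst p * y ^ snd p) L) \<and>
    length L \<le> N ^ n \<and> (\<forall>p\<in>set L. n \<le> snd p \<and> snd p \<le> n * N \<and> norm (fst p) \<le> (\<Prod>j<n. E j))"
proof (induction n)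
  case 0
  show ?case by (intro exI[of _ "[(1,0)]"]) simp
next
  case (Suc n)
  then obtain L where L: "(\<Sum>k=1..N. a k 0 * y ^ k) ^ n = sum_list (map (\<lambda>p. fst p * y ^ snd p) L)"
    "length L \<le> N ^ n" "\<forall>p\<in>set L. n \<le> snd p \<and> snd p \<le> n * N \<and> norm (fst p) \<le> (\<Prod>j<n. E j)"
    by blast
  obtain L' where L': "sum_list (map (\<lambda>p. fst p * y ^ snd p) L) * (\<Sum>k=1..N. a k 0 * y ^ k)
      = sum_list (map (\<lambda>p. fst p * y ^ snd p) L')" "length L' = N * length L"
      "\<forall>p'\<in>set L'. \<exists>p\<in>set L. \<exists>k\<in>{1..N}. fst p' = fst p * a k (snd p) \<and> snd p' = snd p + k"
    using expansion_step[of N y a L, OF comm] by blast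
  have PE: "0 \<le> (\<Prod>j<n. E j)" using E by (simp add: prod_nonneg)
  show ?case
  proof (intro exI[of _ L'] conjI)
    show "(\<Sum>k = 1..N. a k 0 * y ^ k) ^ Suc n = sum_list (map (\<lambda>p. fst p * y ^ snd p) L')"
      using L(1) L'(1) by (metis power_Suc2)
    show "length L' \<le> N ^ Suc n" using L'(2) L(2) by simp
    show "\<forall>p\<in>set L'. Suc n \<le> snd p \<and> snd p \<le> Suc n * N \<and> norm (fst p) \<le> (\<Prod>j<Suc n. E j)"
    proof
      fix p' assume "p' \<in> set L'"
      then obtain p k where p: "p \<in> set L" "k \<in> {1..N}" "fst p' = fst p * a k (snd p)" "snd p' = snd p + k"
        using L'(3) by blast
      have p2: "n \<le> snd p" "snd p \<le> n * N" "norm (fst p) \<le> (\<Prod>j<n. E j)" using L(3) p(1) by auto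
      have "norm (fst p') \<le> norm (fst p) * norm (a k (snd p))"
        using p(3) by (simp add: norm_mult_ineq)
      also have "\<dots> \<le> (\<Prod>j<n. E j) * E n"
        by (intro mult_mono p2 bnd p(2) PE) simp_all
      finally show "Suc n \<le> snd p' \<and> snd p' \<le> Suc n * N \<and> norm (fst p') \<le> (\<Prod>j<Suc n. E j)"
        using p p2 by auto
    qed
  qed
qed

lemma expansion_norm:
  fixes a :: "nat \<Rightarrow> nat \<Rightarrow> 'a::real_normed_algebra_1" and y :: 'a
  assumes comm: "\<And>k e. k \<in> {1..N} \<Longrightarrow> y ^ e * a k 0 = a k e * y ^ e"
    and E: "\<And>j. 0 \<le> E j"
    and bnd: "\<And>k t j. k \<in> {1..N} \<Longrightarrow> j \<le> t \<Longrightarrow> norm (a k t) \<le> E j"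
  shows "norm ((\<Sum>k=1..N. a k 0 * y ^ k) ^ n) \<le> (real N * max 1 (norm y) ^ N) ^ n * (\<Prod>j<n. E j)"
proof -
  define Y where "Y = max 1 (norm y)"
  have Y1: "1 \<le> Y" unfolding Y_def by simp
  obtain L where L: "(\<Sum>k=1..N. a k 0 * y ^ k) ^ n = sum_list (map (\<lambda>p. fst p * y ^ snd p) L)"
    "length L \<le> N ^ n" "\<forall>p\<in>set L. n \<le> snd p \<and> snd p \<le> n * N \<and> norm (fst p) \<le> (\<Prod>j<n. E j)"
    using expansion[of N y a E n, OF comm E bnd] by blast
  have PE: "0 \<le> (\<Prod>j<n. E j)" using E by (simp add: prod_nonneg)
  have "norm (sum_list (map (\<lambda>p. fst p * y ^ snd p) L)) \<le> real (length L) * ((\<Prod>j<n. E j) * Y ^ (n * N))"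
  proof (rule norm_sum_list_bound)
    fix p assume "p \<in> set L"
    hence p: "snd p \<le> n * N" "norm (fst p) \<le> (\<Prod>j<n. E j)" using L(3) by auto
    have "norm (fst p * y ^ snd p) \<le> norm (fst p) * norm (y ^ snd p)" by (rule norm_mult_ineq)
    also have "\<dots> \<le> (\<Prod>j<n. E j) * Y ^ (n * N)"
    proof (intro mult_mono p(2) PE)
      have "norm (y ^ snd p) \<le> norm y ^ snd p" by (rule norm_power_ineq)
      also have "\<dots> \<le> Y ^ snd p" by (intro power_mono) (auto simp: Y_def)
      also have "\<dots> \<le> Y ^ (n * N)" by (intro power_increasing p(1) Y1)
      finally show "norm (y ^ snd p) \<le> Y ^ (n * N)" .
    qed simp
    finally show "norm (fst p * y ^ snd p) \<le> (\<Prod>j<n. E j) * Y ^ (n * N)" .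
  qed
  also have "\<dots> \<le> real (N ^ n) * ((\<Prod>j<n. E j) * Y ^ (n * N))"
    using L(2) PE Y1 by (intro mult_right_mono) auto
  also have "\<dots> = (real N * Y ^ N) ^ n * (\<Prod>j<n. E j)"
    by (simp add: power_mult_distrib power_mult[symmetric] mult.commute mult.left_commute)
  finally show ?thesis using L(1) by (simp add: Y_def)
qed

lemma summable_prod_null:
  fixes w :: "nat \<Rightarrow> real"
  assumes "\<And>j. 0 \<le> w j" "w \<longlonglongrightarrow> 0"
  shows "summable (\<lambda>n. \<Prod>j<n. w j)"
proof -
  have "eventually (\<lambda>n. w n < 1/2) sequentially"
    using assms(2) by (rule order_tendstoD) simp
  then obtain M where M: "\<And>n. n \<ge> M \<Longrightarrow> w n < 1/2" by (auto simp: eventually_sequentially)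
  show ?thesis
  proof (rule summable_ratio_test[of "1/2" M])
    fix n assume "n \<ge> M"
    hence "w n \<le> 1/2" using M by fastforce
    moreover have "0 \<le> (\<Prod>j<n. w j)" using assms(1) by (simp add: prod_nonneg)
    ultimately have "(\<Prod>j<n. w j) * w n \<le> (\<Prod>j<n. w j) * (1/2)"
      by (intro mult_left_mono)
    moreover have "0 \<le> (\<Prod>j<Suc n. w j)" using assms(1) by (simp add: prod_nonneg)
    ultimately show "norm (\<Prod>j<Suc n. w j) \<le> 1/2 * norm (\<Prod>j<n. w j)"
      using \<open>0 \<le> (\<Prod>j<n. w j)\<close> by (simp add: mult.commute)
  qed simp
qed

lemma quasi_summable:
  fixes f :: "'a::real_normed_algebra_1"
  assumes bound: "\<And>n. norm (f ^ n) \<le> K ^ n * (\<Prod>j<n. E j)"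
    and K: "0 \<le> K" and E: "\<And>j. 0 \<le> E j" "E \<longlonglongrightarrow> 0" and r: "0 < r"
  shows "summable (\<lambda>n. norm (f ^ n) * r ^ n)"
proof (rule summable_comparison_test)
  show "summable (\<lambda>n. \<Prod>j<n. K * r * E j)"
  proof (rule summable_prod_null)
    show "0 \<le> K * r * E j" for j using K r E(1) by simp
    show "(\<lambda>j. K * r * E j) \<longlonglongrightarrow> 0" using tendsto_mult_right_zero[OF E(2), of "K*r"] by (simp add: mult.assoc)
  qed
  show "\<exists>N. \<forall>n\<ge>N. norm (norm (f ^ n) * r ^ n) \<le> (\<Prod>j<n. K * r * E j)"
  proof (intro exI allI impI)
    fix n :: nat
    have "norm (norm (f ^ n) * r ^ n) = norm (f ^ n) * r ^ n" using r by simp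
    also have "\<dots> \<le> K ^ n * (\<Prod>j<n. E j) * r ^ n"
      using r by (intro mult_right_mono bound) simp
    also have "\<dots> = (\<Prod>j<n. K * r * E j)"
      by (simp add: prod.distrib power_mult_distrib)
    finally show "norm (norm (f ^ n) * r ^ n) \<le> (\<Prod>j<n. K * r * E j)" .
  qed
qed



lemma neumann:
  fixes z :: "'a::complex_banach_algebra_1"
  assumes "summable (\<lambda>n. norm (z ^ n))"
  shows "invertible_el (1 - z)"
proof -
  have sz: "summable (\<lambda>n. z ^ n)" using assms by (rule summable_norm_cancel)
  have z0: "(\<lambda>n. z ^ n) \<longlonglongrightarrow> 0" using sz by (rule summable_LIMSEQ_zero)
  have tel: "(\<lambda>n. z ^ n - z ^ Suc n) sums 1"
    using telescope_sums'[OF z0] by simp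
  define s where "s = (\<Sum>n. z ^ n)"
  have "(1 - z) * s = (\<Sum>n. (1 - z) * z ^ n)" unfolding s_def by (rule suminf_mult[OF sz, symmetric])
  also have "\<dots> = (\<Sum>n. z ^ n - z ^ Suc n)" by (simp add: left_diff_distrib)
  also have "\<dots> = 1" using tel by (rule sums_unique[symmetric])
  finally have 1: "(1 - z) * s = 1" .
  have "s * (1 - z) = (\<Sum>n. z ^ n * (1 - z))" unfolding s_def by (rule suminf_mult2[OF sz])
  also have "\<dots> = (\<Sum>n. z ^ n - z ^ Suc n)" by (simp add: right_diff_distrib power_commutes)
  also have "\<dots> = 1" using tel by (rule sums_unique[symmetric])
  finally have 2: "s * (1 - z) = 1" .
  show ?thesis by (rule invertible_elI[OF 2 1])
qed

lemma spectrum_quasi: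
  fixes f :: "'a::complex_banach_algebra_1"
  assumes sm: "\<And>r. r > 0 \<Longrightarrow> summable (\<lambda>n. norm (f ^ n) * r ^ n)"
  shows "spectrum f = {0}"
proof -
  have "\<not> invertible_el f"
  proof
    assume inv: "invertible_el f"
    define g where "g = inv_el f"
    have fg: "f * g = 1" using inv_el[OF inv] unfolding g_def by simp
    have pw: "f ^ n * g ^ n = 1" for n
    proof (induction n)
      case (Suc n)
      have "f ^ Suc n * g ^ Suc n = f * (f ^ n * g ^ n) * g" by (simp add: power_Suc2 mult.assoc power_commutes)
      thus ?case using Suc fg by simp
    qed simp
    define r where "r = norm g + 1"
    have r: "r > 0" unfolding r_def by (simp add: add_nonneg_pos)
    have "(\<lambda>n. norm (f ^ n) * r ^ n) \<longlonglongrightarrow> 0" by (rule summable_LIMSEQ_zero[OF sm[OF r]])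
    hence "eventually (\<lambda>n. norm (f ^ n) * r ^ n < 1) sequentially"
      by (rule order_tendstoD) simp
    then obtain n where n: "norm (f ^ n) * r ^ n < 1" by (auto simp: eventually_sequentially)
    have "1 = norm (f ^ n * g ^ n)" using pw by simp
    also have "\<dots> \<le> norm (f ^ n) * norm (g ^ n)" by (rule norm_mult_ineq)
    also have "\<dots> \<le> norm (f ^ n) * r ^ n"
    proof (rule mult_left_mono)
      have "norm (g ^ n) \<le> norm g ^ n" by (rule norm_power_ineq)
      also have "\<dots> \<le> r ^ n" unfolding r_def by (intro power_mono) auto
      finally show "norm (g ^ n) \<le> r ^ n" .
    qed simp
    finally show False using n by simp
  qed
  hence "0 \<in> spectrum f" unfolding spectrum_def by simp
  moreover have "c \<notin> spectrum f" if c: "c \<noteq> 0" for c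
  proof -
    define z where "z = inverse c *\<^sub>C f"
    have "summable (\<lambda>n. norm (f ^ n) * inverse (cmod c) ^ n)"
      using c by (intro sm) simp
    moreover have "norm (z ^ n) = norm (f ^ n) * inverse (cmod c) ^ n" for n
      unfolding z_def by (simp add: scaleC_power norm_scaleC norm_power norm_inverse mult.commute)
    ultimately have "summable (\<lambda>n. norm (z ^ n))" by simp
    hence "invertible_el (1 - z)" by (rule neumann)
    hence "invertible_el ((- c) *\<^sub>C (1 - z))" using c by (intro invertible_scale) auto
    moreover have "(- c) *\<^sub>C (1 - z) = f - c *\<^sub>C 1"
      unfolding z_def using c
      by (simp add: scaleC_diff_right scaleC_minus_left scaleC_scaleC scaleC_one)
    ultimately show ?thesis unfolding spectrum_def by simp
  qed
  ultimately show ?thesis by auto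
qed



lemma inv_bounded:
  fixes u :: "nat \<Rightarrow> 'a::complex_banach_algebra_1"
  assumes lim: "u \<longlonglongrightarrow> d *\<^sub>C 1" and d: "d \<noteq> 0" and inv: "\<And>t. invertible_el (u t)"
  shows "eventually (\<lambda>t. norm (inv_el (u t)) \<le> 2 / cmod d) sequentially"
proof -
  have "eventually (\<lambda>t. dist (u t) (d *\<^sub>C 1) < cmod d / 2) sequentially"
    using lim d by (intro tendstoD) auto
  thus ?thesis
  proof eventually_elim
    case (elim t)
    define v where "v = inv_el (u t)"
    have vu: "v * u t = 1" using inv_el[OF inv] unfolding v_def by simp
    have "d *\<^sub>C v = v * (d *\<^sub>C 1)" by (simp add: mult_scaleC_right)
    also have "\<dots> = v * (u t + (d *\<^sub>C 1 - u t))" by simp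
    also have "\<dots> = 1 + v * (d *\<^sub>C 1 - u t)" by (simp only: distrib_left vu)
    finally have eq: "d *\<^sub>C v = 1 + v * (d *\<^sub>C 1 - u t)" .
    have "cmod d * norm v = norm (d *\<^sub>C v)" by (simp add: norm_scaleC)
    also have "\<dots> \<le> norm (1::'a) + norm (v * (d *\<^sub>C 1 - u t))" unfolding eq by (rule norm_triangle_ineq)
    also have "\<dots> \<le> 1 + norm v * norm (d *\<^sub>C 1 - u t)" by (simp add: norm_mult_ineq)
    also have "\<dots> \<le> 1 + norm v * (cmod d / 2)"
      using elim by (intro add_left_mono mult_left_mono) (auto simp: dist_norm norm_minus_commute)
    finally have "cmod d * norm v \<le> 1 + norm v * (cmod d / 2)" .
    hence "norm v * cmod d \<le> 2" by (simp add: algebra_simps)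
    thus ?case using d unfolding v_def[symmetric] by (simp add: field_simps)
  qed
qed

theorem lemma3p4:
  fixes x y :: "'a::complex_banach_algebra_1" and q :: complex
    and N :: nat and P D :: "nat \<Rightarrow> complex poly"
  assumes "0 < cmod q" and "cmod q < 1"
    and "x * y = inverse q *\<^sub>C (y * x)"
    and "q_hull q (spectrum x) = spectrum x"
    and "\<And>k. 1 \<le> k \<Longrightarrow> k \<le> N \<Longrightarrow> (\<forall>c\<in>spectrum x. poly (D k) c \<noteq> 0)"
    and "\<And>k. 1 \<le> k \<Longrightarrow> k \<le> N \<Longrightarrow> poly (P k) 0 / poly (D k) 0 = 0"
  shows "spectrum (\<Sum>k=1..N. rat_el (P k) (D k) x * y ^ k) = {0}"
proof -
  note qpos = assms(1) and qlt = assms(2) and xy = assms(3) and hull = assms(4)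
    and Dnz = assms(5) and PD0 = assms(6)
  have q0: "q \<noteq> 0" using qpos by auto
  define X where "X t = (q ^ t) *\<^sub>C x" for t :: nat
  have yx: "y * x = q *\<^sub>C (x * y)"
    using q0 by (simp add: xy scaleC_scaleC scaleC_one)
  have yX: "y * X t = X (Suc t) * y" for t
    unfolding X_def by (simp add: mult_scaleC_left mult_scaleC_right yx scaleC_scaleC mult.commute)
  have sp0: "0 \<in> spectrum x" using hull unfolding q_hull_def by blast
  have hullmem: "q ^ t * c \<in> spectrum x" if "c \<in> spectrum x" for t c
    using hull that unfolding q_hull_def by blast
  have D0: "poly (D k) 0 \<noteq> 0" if "k \<in> {1..N}" for k using Dnz[of k] sp0 that by auto
  have P0: "poly (P k) 0 = 0" if "k \<in> {1..N}" for k using PD0[of k] D0[OF that] that by auto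
  have Dne: "D k \<noteq> 0" if "k \<in> {1..N}" for k using D0[OF that] by auto
  have invD: "invertible_el (poly_el (D k) (X t))" if k: "k \<in> {1..N}" for k t
  proof (rule inv_poly[OF Dne[OF k]])
    fix c assume c: "poly (D k) c = 0"
    have qt: "q ^ t \<noteq> 0" using q0 by simp
    have "c / q ^ t \<notin> spectrum x"
    proof
      assume "c / q ^ t \<in> spectrum x"
      hence "q ^ t * (c / q ^ t) \<in> spectrum x" by (rule hullmem)
      hence "c \<in> spectrum x" using qt q0 by simp
      thus False using Dnz[of k] k c by auto
    qed
    hence "invertible_el (x - (c / q ^ t) *\<^sub>C 1)" unfolding spectrum_def by simp
    hence "invertible_el (q ^ t *\<^sub>C (x - (c / q ^ t) *\<^sub>C 1))" using qt by (rule invertible_scale)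
    moreover have "q ^ t *\<^sub>C (x - (c / q ^ t) *\<^sub>C 1) = X t - c *\<^sub>C 1"
      unfolding X_def using qt by (simp add: scaleC_diff_right scaleC_scaleC)
    ultimately show "invertible_el (X t - c *\<^sub>C 1)" by simp
  qed
  define a where "a k t = rat_el (P k) (D k) (X t)" for k t
  have comm1: "y * a k t = a k (Suc t) * y" if k: "k \<in> {1..N}" for k t
  proof -
    define u where "u = poly_el (D k) (X t)"
    define v where "v = poly_el (D k) (X (Suc t))"
    have yP: "y * poly_el (P k) (X t) = poly_el (P k) (X (Suc t)) * y" by (rule poly_el_comm[OF yX])
    have yD: "y * u = v * y" unfolding u_def v_def by (rule poly_el_comm[OF yX])
    have iu: "inv_el u * u = 1" "u * inv_el u = 1" using inv_el[OF invD[OF k]] unfolding u_def by auto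
    have iv: "inv_el v * v = 1" "v * inv_el v = 1" using inv_el[OF invD[OF k]] unfolding v_def by auto
    have yinv: "y * inv_el u = inv_el v * y"
    proof -
      have "inv_el v * y = inv_el v * y * (u * inv_el u)" using iu by simp
      also have "\<dots> = inv_el v * (y * u) * inv_el u" by (simp add: mult.assoc)
      also have "\<dots> = (inv_el v * v) * y * inv_el u" by (simp add: yD mult.assoc)
      also have "\<dots> = y * inv_el u" using iv by simp
      finally show ?thesis by simp
    qed
    have "y * a k t = (y * poly_el (P k) (X t)) * inv_el u"
      unfolding a_def rat_el_def u_def by (simp add: mult.assoc)
    also have "\<dots> = poly_el (P k) (X (Suc t)) * (y * inv_el u)" by (simp add: yP mult.assoc)
    also have "\<dots> = a k (Suc t) * y"
      unfolding yinv a_def rat_el_def v_def by (simp add: mult.assoc)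
    finally show ?thesis .
  qed
  have commg: "y ^ e * a k t = a k (t + e) * y ^ e" if k: "k \<in> {1..N}" for k t e
  proof (induction e arbitrary: t)
    case 0
    then show ?case by simp
  next
    case (Suc e)
    have "y ^ Suc e * a k t = y ^ e * (y * a k t)" by (simp only: power_Suc2 mult.assoc)
    also have "\<dots> = y ^ e * a k (Suc t) * y" by (simp add: comm1[OF k] mult.assoc)
    also have "\<dots> = a k (t + Suc e) * y ^ Suc e" by (simp add: Suc.IH mult.assoc power_commutes)
    finally show ?case .
  qed
  have comm: "y ^ e * a k 0 = a k e * y ^ e" if "k \<in> {1..N}" for k e
    using commg[OF that, of e 0] by simp
  have hq: "(\<lambda>t. q ^ t) \<longlonglongrightarrow> 0" using qlt by (intro LIMSEQ_power_zero) simp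
  have conv: "(\<lambda>t. a k t) \<longlonglongrightarrow> 0" if k: "k \<in> {1..N}" for k
  proof -
    have PX: "(\<lambda>t. poly_el (P k) (X t)) \<longlonglongrightarrow> 0"
      using poly_el_tendsto[OF hq, of "P k" x] unfolding X_def by (simp add: poly_el_at0 P0[OF k])
    have DX: "(\<lambda>t. poly_el (D k) (X t)) \<longlonglongrightarrow> poly (D k) 0 *\<^sub>C 1"
      using poly_el_tendsto[OF hq, of "D k" x] unfolding X_def by (simp add: poly_el_at0)
    have ev: "eventually (\<lambda>t. norm (inv_el (poly_el (D k) (X t))) \<le> 2 / cmod (poly (D k) 0)) sequentially"
      by (rule inv_bounded[OF DX D0[OF k] invD[OF k]])
    show ?thesis
    proof (rule Lim_null_comparison)
      show "eventually (\<lambda>t. norm (a k t) \<le> norm (poly_el (P k) (X t)) * (2 / cmod (poly (D k) 0))) sequentially"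
        using ev
      proof eventually_elim
        case (elim t)
        have "norm (a k t) \<le> norm (poly_el (P k) (X t)) * norm (inv_el (poly_el (D k) (X t)))"
          unfolding a_def rat_el_def by (rule norm_mult_ineq)
        also have "\<dots> \<le> norm (poly_el (P k) (X t)) * (2 / cmod (poly (D k) 0))"
          using elim by (intro mult_left_mono) auto
        finally show ?case .
      qed
      show "(\<lambda>t. norm (poly_el (P k) (X t)) * (2 / cmod (poly (D k) 0))) \<longlonglongrightarrow> 0"
        using PX by (intro tendsto_mult_left_zero tendsto_norm_zero)
    qed
  qed
  define A where "A t = (\<Sum>k\<in>{1..N}. norm (a k t))" for t
  have A0: "0 \<le> A t" for t unfolding A_def by (simp add: sum_nonneg)
  have Alim: "A \<longlonglongrightarrow> 0"
  proof -
    have "(\<lambda>t. \<Sum>k\<in>{1..N}. norm (a k t)) \<longlonglongrightarrow> (\<Sum>k\<in>{1..N}. 0)"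
      by (intro tendsto_sum) (use conv in \<open>auto intro: tendsto_norm_zero\<close>)
    thus ?thesis unfolding A_def by simp
  qed
  have akA: "norm (a k t) \<le> A t" if "k \<in> {1..N}" for k t
    unfolding A_def by (rule member_le_sum) (use that in auto)
  have bddA: "bdd_above (range A)"
    using Alim by (intro Bseq_bdd_above convergent_imp_Bseq) (auto simp: convergent_def)
  define E where "E j = Sup (A ` {j..})" for j
  have bddj: "bdd_above (A ` {j..})" for j using bddA by (rule bdd_above_mono) auto
  have AE: "A t \<le> E j" if "j \<le> t" for j t
    unfolding E_def by (rule cSup_upper) (use that bddj in auto)
  have E0: "0 \<le> E j" for j using AE[of j j] A0[of j] by simp
  have Elim: "E \<longlonglongrightarrow> 0"
  proof (rule LIMSEQ_I)
    fix r :: real assume r: "0 < r"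
    have "eventually (\<lambda>t. A t < r / 2) sequentially"
      using Alim r by (intro order_tendstoD) auto
    then obtain M where M: "\<And>t. t \<ge> M \<Longrightarrow> A t < r / 2" by (auto simp: eventually_sequentially)
    show "\<exists>no. \<forall>n\<ge>no. norm (E n - 0) < r"
    proof (intro exI allI impI)
      fix n assume n: "n \<ge> M"
      have "E n \<le> r / 2" unfolding E_def
        by (rule cSup_least) (use M n in \<open>auto intro: less_imp_le\<close>)
      thus "norm (E n - 0) < r" using E0[of n] r by simp
    qed
  qed
  have bnd: "norm (a k t) \<le> E j" if "k \<in> {1..N}" "j \<le> t" for k t j
    using akA[OF that(1), of t] AE[OF that(2)] by linarith
  define K where "K = real N * max 1 (norm y) ^ N"
  have K0: "0 \<le> K" unfolding K_def by simp
  have fn: "norm ((\<Sum>k=1..N. a k 0 * y ^ k) ^ n) \<le> K ^ n * (\<Prod>j<n. E j)" for n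
    unfolding K_def by (rule expansion_norm[of N y a E n, OF comm E0 bnd]) auto
  have "spectrum (\<Sum>k=1..N. a k 0 * y ^ k) = {0}"
    by (rule spectrum_quasi, rule quasi_summable[OF fn K0 E0 Elim])
  moreover have "a k 0 = rat_el (P k) (D k) x" for k
    unfolding a_def X_def by (simp add: scaleC_one)
  ultimately show ?thesis by simp
qed


end
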